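(* Fix constants $0\le\gamma\le\delta\le1$. Let $p_e(n;\gamma,\delta)$ be the probability that $1$ is contained in a cycle of length between $\gamma n$ and $\delta n$ of a permutation chosen uniformly at random from all permutations of $[n]$ with all cycle lengths even. Then $\lim_{n\to\infty}p_e(n;\gamma,\delta)=\sqrt{1-\gamma}-\sqrt{1-\delta}$, where the limit is taken through even $n$. *)

theory Defs
  imports "HOL-Analysis.Analysis" "HOL-Combinatorics.Permutations" "HOL-Combinatorics.Orbits"
begin

definition cycle_len :: "(nat \<Rightarrow> nat) \<Rightarrow> nat \<Rightarrow> nat" where
  "cycle_len \<sigma> x = card (orbit \<sigma> x)"

definition even_cycle_perms :: "nat \<Rightarrow> (nat \<Rightarrow> nat) set" where
  "even_cycle_perms n = {\<sigma>. \<sigma> permutes {1..n} \<and> (\<forall>x\<in>{1..n}. even (cycle_len \<sigma> x))}"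

definition p_e :: "nat \<Rightarrow> real \<Rightarrow> real \<Rightarrow> real" where
  "p_e n \<gamma> \<delta> =
     real (card {\<sigma> \<in> even_cycle_perms n.
                  \<gamma> * real n \<le> real (cycle_len \<sigma> 1) \<and> real (cycle_len \<sigma> 1) \<le> \<delta> * real n})
     / real (card (even_cycle_perms n))"

end

theory Submission
  imports Defs
begin


primrec uu :: "nat \<Rightarrow> real" where
  "uu 0 = 1"
| "uu (Suc j) = uu j * (2 * real j + 1) / (2 * real j + 2)"

lemma uu_pos: "uu j > 0"
  by (induction j) auto

lemma sum_uu: "(\<Sum>j<m. uu j) = 2 * real m * uu m"
proof (induction m)
  case (Suc m)
  then show ?case by (simp add: field_simps)
qed simp

lemma uu_sq_le: "(uu j)^2 \<le> 1 / (2 * real j + 1)"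
proof (induction j)
  case (Suc j)
  have "(uu (Suc j))^2 = (uu j)^2 * ((2 * real j + 1) / (2 * real j + 2))^2"
    by (simp add: power_mult_distrib power_divide)
  also have "\<dots> \<le> 1 / (2 * real j + 1) * ((2 * real j + 1) / (2 * real j + 2))^2"
    by (rule mult_right_mono[OF Suc]) simp
  also have "\<dots> = (2 * real j + 1) / (2 * real j + 2)^2"
    by (simp add: power2_eq_square)
  also have "\<dots> \<le> 1 / (2 * real (Suc j) + 1)"
  proof -
    have p: "(2 * real j + 2)^2 > 0" "2 * real (Suc j) + 1 > 0" by auto
    have "(2 * real j + 1) * (2 * real (Suc j) + 1) \<le> (2 * real j + 2)^2"
      by (simp add: power2_eq_square algebra_simps)
    then show ?thesis using p by (simp add: divide_simps)
  qed
  finally show ?case .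
qed simp

definition ww :: "nat \<Rightarrow> real" where "ww j = real j * (uu j)^2"

lemma ww_Suc_ge: "ww j \<le> ww (Suc j)"
proof -
  have e: "ww (Suc j) = uu j^2 * ((real j+1)*(2*real j+1)^2 / (2*real j+2)^2)"
    by (simp add: ww_def power_mult_distrib power_divide)
  have p: "(2*real j+2)^2 > 0" by auto
  have "real j * (2*real j+2)^2 \<le> (real j + 1)*(2*real j+1)^2"
    by (simp add: power2_eq_square algebra_simps)
  then have "real j \<le> (real j+1)*(2*real j+1)^2 / (2*real j+2)^2"
    using p by (simp add: pos_le_divide_eq)
  then show ?thesis unfolding e unfolding ww_def
    by (metis mult.commute mult_left_mono zero_le_power2)
qed

lemma ww_mono: "incseq ww"
  using ww_Suc_ge by (simp add: incseq_SucI)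

lemma ww_le: "ww j \<le> 1/2"
proof -
  have "ww j \<le> real j * (1 / (2 * real j + 1))"
    unfolding ww_def by (rule mult_left_mono[OF uu_sq_le]) simp
  also have "\<dots> \<le> 1/2" by (simp add: field_simps)
  finally show ?thesis .
qed

lemma ww_nonneg: "ww j \<ge> 0" by (simp add: ww_def)

lemma ww_1: "ww 1 = 1/4" by (simp add: ww_def power2_eq_square)

lemma ww_ge: "j \<ge> 1 \<Longrightarrow> ww j \<ge> 1/4"
  using ww_mono ww_1 by (metis incseq_def)

lemma ww_conv: "\<exists>W. ww \<longlonglongrightarrow> W \<and> W \<ge> 1/4"
proof -
  have "Bseq ww" using ww_le ww_nonneg
    by (intro BseqI'[where K="1/2"]) auto
  then obtain W where W: "ww \<longlonglongrightarrow> W"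
    using ww_mono Bseq_mono_convergent convergent_def
    by (metis incseq_def)
  moreover have "W \<ge> 1/4"
    using W ww_ge by (intro LIMSEQ_le_const) auto
  ultimately show ?thesis by blast
qed



definition gg :: "nat \<Rightarrow> real" where "gg n = real n * uu n"

lemma gg_nonneg: "gg n \<ge> 0" using uu_pos[of n] by (simp add: gg_def)

lemma gg_sq: "(gg n)^2 = real n * ww n"
  by (simp add: gg_def ww_def power2_eq_square)

lemma ratio_aux:
  assumes lim: "(\<lambda>m. real (N m) / real m) \<longlonglongrightarrow> t" and t: "t \<ge> 0"
  shows "(\<lambda>m. real (N m) / real m * (ww (N m) / ww m)) \<longlonglongrightarrow> t"
proof (cases "t = 0")
  case True
  have ev1: "\<forall>\<^sub>F m in sequentially. 0 \<le> real (N m) / real m * (ww (N m) / ww m)"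
    using ww_nonneg by (intro always_eventually allI) (simp)
  have ev2: "\<forall>\<^sub>F m in sequentially. real (N m) / real m * (ww (N m) / ww m) \<le> 2 * (real (N m) / real m)"
    using eventually_ge_at_top[of "1::nat"]
  proof eventually_elim
    case (elim m)
    have h: "ww (N m) / ww m \<le> (1/2) / (1/4)"
      using ww_ge[OF elim] ww_le[of "N m"] ww_nonneg[of "N m"]
      by (intro frac_le) auto
    have nn: "real (N m) / real m \<ge> 0" by simp
    show ?case using mult_left_mono[OF h nn] by (simp add: mult.commute)
  qed
  have "(\<lambda>m. 2 * (real (N m) / real m)) \<longlonglongrightarrow> 2 * 0"
    using lim True by (intro tendsto_mult) auto
  then show ?thesis using True
    by (intro tendsto_sandwich[OF ev1 ev2]) auto
next
  case False
  then have tp: "t > 0" using t by simp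
  obtain W where W: "ww \<longlonglongrightarrow> W" "W \<ge> 1/4" using ww_conv by blast
  have fN: "filterlim N at_top sequentially"
  proof -
    have fl: "filterlim (\<lambda>m. real (N m) / real m * real m) at_top sequentially"
      by (rule filterlim_tendsto_pos_mult_at_top[OF lim tp filterlim_real_sequentially])
    have ev: "\<forall>\<^sub>F m in sequentially. real (N m) / real m * real m = real (N m)"
      using eventually_ge_at_top[of "1::nat"] by eventually_elim auto
    have r: "filterlim (\<lambda>m. real (N m)) at_top sequentially"
      using filterlim_cong[OF refl refl ev] fl by simp
    show ?thesis unfolding filterlim_at_top
    proof
      fix Z :: nat
      have "\<forall>\<^sub>F m in sequentially. real Z \<le> real (N m)"
        using r unfolding filterlim_at_top by blast
      then show "\<forall>\<^sub>F m in sequentially. Z \<le> N m" by eventually_elim simp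
    qed
  qed
  have "(\<lambda>m. ww (N m)) \<longlonglongrightarrow> W"
    using filterlim_compose[OF W(1) fN] .
  then have "(\<lambda>m. real (N m) / real m * (ww (N m) / ww m)) \<longlonglongrightarrow> t * (W / W)"
    using W lim by (intro tendsto_intros) auto
  then show ?thesis using W by simp
qed

lemma ratio_lim:
  assumes lim: "(\<lambda>m. real (N m) / real m) \<longlonglongrightarrow> t" and t: "t \<ge> 0"
  shows "(\<lambda>m. gg (N m) / gg m) \<longlonglongrightarrow> sqrt t"
proof -
  have "(\<lambda>m. sqrt (real (N m) / real m * (ww (N m) / ww m))) \<longlonglongrightarrow> sqrt t"
    by (intro tendsto_real_sqrt ratio_aux lim t)
  moreover have "\<forall>\<^sub>F m in sequentially. sqrt (real (N m) / real m * (ww (N m) / ww m)) = gg (N m) / gg m"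
    using eventually_ge_at_top[of "1::nat"]
  proof eventually_elim
    case (elim m)
    have "real (N m) / real m * (ww (N m) / ww m) = (gg (N m) / gg m)^2"
      by (simp add: power_divide gg_sq)
    then show ?case using gg_nonneg[of "N m"] gg_nonneg[of m] by simp
  qed
  ultimately show ?thesis by (rule Lim_transform_eventually)
qed



definition AA :: "'a set \<Rightarrow> ('a \<Rightarrow> 'a) set" where
  "AA S = {\<sigma>. \<sigma> permutes S \<and> (\<forall>x\<in>S. even (card (orbit \<sigma> x)))}"

definition MM :: "'a set \<Rightarrow> 'a \<Rightarrow> nat \<Rightarrow> ('a \<Rightarrow> 'a) set" where
  "MM S a L = {\<sigma>. \<sigma> permutes S \<and> card (orbit \<sigma> a) = L \<and>
      (\<forall>x\<in>S. x \<notin> orbit \<sigma> a \<longrightarrow> even (card (orbit \<sigma> x)))}"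

lemma orb_eq:
  assumes "permutation \<sigma>" "s \<in> orbit \<sigma> x"
  shows "orbit \<sigma> s = orbit \<sigma> x"
  using orbit_cyclic_eq3[OF cyclic_on_orbit'[OF assms(1)] assms(2)] .

lemma key:
  assumes perm: "\<sigma> permutes S" and fin: "finite S" and aS: "a \<in> S" and ne: "\<sigma> a \<noteq> a"
  defines "b \<equiv> \<sigma> a"
  defines "\<sigma>' \<equiv> \<sigma> \<circ> Transposition.transpose a b"
  shows "\<sigma>' permutes S - {b}" "orbit \<sigma> a = insert b (orbit \<sigma>' a)" "b \<notin> orbit \<sigma>' a"
    "\<And>x. x \<notin> orbit \<sigma> a \<Longrightarrow> orbit \<sigma>' x = orbit \<sigma> x"
proof -
  have pm: "permutation \<sigma>" using perm fin permutes_imp_permutation by blast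
  have bS: "b \<in> S" using perm aS by (simp add: b_def permutes_in_image)
  have ab: "a \<noteq> b" using ne b_def by auto
  have s1: "\<sigma>' a = \<sigma> b" "\<sigma>' b = b" "\<And>y. y \<noteq> a \<Longrightarrow> y \<noteq> b \<Longrightarrow> \<sigma>' y = \<sigma> y"
    by (auto simp: \<sigma>'_def b_def)
  have "\<sigma>' permutes S" unfolding \<sigma>'_def
    by (rule permutes_compose[OF permutes_swap_id[OF aS bS] perm])
  then show P: "\<sigma>' permutes S - {b}"
    by (rule permutes_superset) (use s1 in auto)
  show nb: "b \<notin> orbit \<sigma>' a"
    using permutes_orbit_subset[OF P, of a] aS ab by auto
  have aa: "a \<in> orbit \<sigma> a" using pm by (rule permutation_self_in_orbit)
  have ba: "b \<in> orbit \<sigma> a" unfolding b_def by (rule orbit.base)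
  have sub1: "orbit \<sigma>' a \<subseteq> orbit \<sigma> a"
  proof
    fix y assume "y \<in> orbit \<sigma>' a"
    then show "y \<in> orbit \<sigma> a"
    proof induction
      case base
      then show ?case using s1 ba by (simp add: orbit.step)
    next
      case (step y)
      have "Transposition.transpose a b y \<in> orbit \<sigma> a"
        using step aa ba by (cases "y = a"; cases "y = b") auto
      then show ?case by (simp add: \<sigma>'_def orbit.step)
    qed
  qed
  have sub2: "orbit \<sigma> a \<subseteq> insert b (orbit \<sigma>' a)"
  proof
    fix y assume "y \<in> orbit \<sigma> a"
    then show "y \<in> insert b (orbit \<sigma>' a)"
    proof induction
      case base
      then show ?case by (simp add: b_def)
    next
      case (step y)
      show ?case
      proof (cases "y = b")
        case True
        then show ?thesis using s1 orbit.base[of \<sigma>' a] by simp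
      next
        case False
        then have y: "y \<in> orbit \<sigma>' a" using step by simp
        show ?thesis
        proof (cases "y = a")
          case True then show ?thesis by (simp add: b_def)
        next
          case False
          then show ?thesis using s1(3)[OF False \<open>y \<noteq> b\<close>] orbit.step[OF y] by simp
        qed
      qed
    qed
  qed
  show "orbit \<sigma> a = insert b (orbit \<sigma>' a)" using sub1 sub2 ba by auto
  fix x assume x: "x \<notin> orbit \<sigma> a"
  have xx: "x \<in> orbit \<sigma> x" using pm by (rule permutation_self_in_orbit)
  show "orbit \<sigma>' x = orbit \<sigma> x"
  proof (rule orbit_cong[OF xx])
    fix s assume s: "s \<in> orbit \<sigma> x"
    have "s \<noteq> a"
    proof
      assume "s = a"
      then have "orbit \<sigma> a = orbit \<sigma> x" using orb_eq[OF pm s] by simp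
      then show False using x xx by simp
    qed
    moreover have "s \<noteq> b"
    proof
      assume "s = b"
      then have "orbit \<sigma> b = orbit \<sigma> x" using orb_eq[OF pm s] by simp
      moreover have "orbit \<sigma> b = orbit \<sigma> a" using orb_eq[OF pm ba] .
      ultimately show False using x xx by simp
    qed
    ultimately show "\<sigma>' s = \<sigma> s" using s1 by simp
  qed
qed



lemma MM_step:
  assumes perm: "\<sigma> permutes S" and fin: "finite S" and aS: "a \<in> S" and ne: "\<sigma> a \<noteq> a"
  shows "\<sigma> \<in> MM S a (Suc L) \<longleftrightarrow> \<sigma> \<circ> Transposition.transpose a (\<sigma> a) \<in> MM (S - {\<sigma> a}) a L"
proof -
  note k = key[OF perm fin aS ne]
  have fo: "finite (orbit (\<sigma> \<circ> Transposition.transpose a (\<sigma> a)) a)"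
  proof -
    have "a \<in> S - {\<sigma> a}" using aS ne by auto
    from permutes_orbit_subset[OF k(1) this] show ?thesis
      by (rule finite_subset) (use fin in auto)
  qed
  have c: "card (orbit \<sigma> a) = Suc (card (orbit (\<sigma> \<circ> Transposition.transpose a (\<sigma> a)) a))"
    using k(2,3) fo by simp
  have ex: "(\<forall>x\<in>S. x \<notin> orbit \<sigma> a \<longrightarrow> even (card (orbit \<sigma> x))) \<longleftrightarrow>
      (\<forall>x\<in>S - {\<sigma> a}. x \<notin> orbit (\<sigma> \<circ> Transposition.transpose a (\<sigma> a)) a \<longrightarrow>
          even (card (orbit (\<sigma> \<circ> Transposition.transpose a (\<sigma> a)) x)))"
  proof (intro iffI ballI impI)
    fix x assume H: "\<forall>x\<in>S. x \<notin> orbit \<sigma> a \<longrightarrow> even (card (orbit \<sigma> x))"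
      and x: "x \<in> S - {\<sigma> a}" "x \<notin> orbit (\<sigma> \<circ> Transposition.transpose a (\<sigma> a)) a"
    have "x \<notin> orbit \<sigma> a" using k(2) x by blast
    then show "even (card (orbit (\<sigma> \<circ> Transposition.transpose a (\<sigma> a)) x))"
      using H x k(4) by simp
  next
    fix x assume H: "\<forall>x\<in>S - {\<sigma> a}. x \<notin> orbit (\<sigma> \<circ> Transposition.transpose a (\<sigma> a)) a \<longrightarrow>
          even (card (orbit (\<sigma> \<circ> Transposition.transpose a (\<sigma> a)) x))"
      and x: "x \<in> S" "x \<notin> orbit \<sigma> a"
    have "x \<in> S - {\<sigma> a}" "x \<notin> orbit (\<sigma> \<circ> Transposition.transpose a (\<sigma> a)) a"
      using k(2) x by blast+
    then have "even (card (orbit (\<sigma> \<circ> Transposition.transpose a (\<sigma> a)) x))"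
      using H by blast
    then show "even (card (orbit \<sigma> x))"
      using k(4)[OF x(2)] by simp
  qed
  show ?thesis unfolding MM_def mem_Collect_eq c ex using perm k(1) by simp
qed

lemma card_orbit_1:
  assumes "permutation \<sigma>"
  shows "card (orbit \<sigma> a) = 1 \<longleftrightarrow> \<sigma> a = a"
proof
  assume c: "card (orbit \<sigma> a) = 1"
  have a: "a \<in> orbit \<sigma> a" using assms by (rule permutation_self_in_orbit)
  have fa: "\<sigma> a \<in> orbit \<sigma> a" by (rule orbit.base)
  have fin: "finite (orbit \<sigma> a)" using c card.infinite by fastforce
  have "orbit \<sigma> a = {a}"
    using c a fin card_1_singletonE by (metis singletonD)
  then show "\<sigma> a = a" using fa by simp
next
  assume "\<sigma> a = a"
  then have "orbit \<sigma> a = {a}" by (simp add: orbit_eq_singleton_iff)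
  then show "card (orbit \<sigma> a) = 1" by simp
qed

lemma MM_1:
  assumes fin: "finite S" and aS: "a \<in> S"
  shows "MM S a 1 = AA (S - {a})"
proof (intro set_eqI iffI)
  fix \<sigma> assume s: "\<sigma> \<in> MM S a 1"
  then have perm: "\<sigma> permutes S" by (simp add: MM_def)
  have pm: "permutation \<sigma>" using perm fin permutes_imp_permutation by blast
  have fa: "\<sigma> a = a" using s card_orbit_1[OF pm] by (simp add: MM_def)
  have o: "orbit \<sigma> a = {a}" using fa by (simp add: orbit_eq_singleton_iff)
  have "\<sigma> permutes S - {a}" using perm by (rule permutes_superset) (use fa in auto)
  then show "\<sigma> \<in> AA (S - {a})" using s o by (auto simp: MM_def AA_def)
next
  fix \<sigma> assume s: "\<sigma> \<in> AA (S - {a})"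
  then have p: "\<sigma> permutes S - {a}" by (simp add: AA_def)
  then have fa: "\<sigma> a = a" by (simp add: permutes_not_in)
  have perm: "\<sigma> permutes S" using p by (rule permutes_subset) auto
  have pm: "permutation \<sigma>" using perm fin permutes_imp_permutation by blast
  have o: "orbit \<sigma> a = {a}" using fa by (simp add: orbit_eq_singleton_iff)
  show "\<sigma> \<in> MM S a 1" using s perm o by (auto simp: MM_def AA_def)
qed

lemma finite_MM: "finite S \<Longrightarrow> finite (MM S a L)"
  by (rule finite_subset[OF _ finite_permutations[of S]]) (auto simp: MM_def)

lemma finite_AA: "finite S \<Longrightarrow> finite (AA S)"
  by (rule finite_subset[OF _ finite_permutations[of S]]) (auto simp: AA_def)

lemma card_MM_Suc:
  assumes fin: "finite S" and aS: "a \<in> S" and L: "L \<ge> 1"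
  shows "card (MM S a (Suc L)) = (\<Sum>b\<in>S - {a}. card (MM (S - {b}) a L))"
proof -
  define F where "F = (\<lambda>\<sigma>::'a\<Rightarrow>'a. (\<sigma> a, \<sigma> \<circ> Transposition.transpose a (\<sigma> a)))"
  define G where "G = (\<lambda>(b::'a, \<tau>::'a\<Rightarrow>'a). \<tau> \<circ> Transposition.transpose a b)"
  have bij: "bij_betw F (MM S a (Suc L)) (SIGMA b:S - {a}. MM (S - {b}) a L)"
  proof (rule bij_betw_byWitness[where f'=G])
    show "\<forall>\<sigma>\<in>MM S a (Suc L). G (F \<sigma>) = \<sigma>"
      by (simp add: F_def G_def fun_eq_iff)
    show "\<forall>p\<in>(SIGMA b:S - {a}. MM (S - {b}) a L). F (G p) = p"
    proof
      fix p assume "p \<in> (SIGMA b:S - {a}. MM (S - {b}) a L)"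
      then obtain b \<tau> where p: "p = (b, \<tau>)" "b \<in> S - {a}" "\<tau> permutes S - {b}"
        by (auto simp: MM_def)
      have "\<tau> b = b" using p by (simp add: permutes_not_in)
      then show "F (G p) = p" using p by (simp add: F_def G_def fun_eq_iff)
    qed
    show "F ` MM S a (Suc L) \<subseteq> (SIGMA b:S - {a}. MM (S - {b}) a L)"
    proof
      fix q assume "q \<in> F ` MM S a (Suc L)"
      then obtain \<sigma> where q: "q = F \<sigma>" and s: "\<sigma> \<in> MM S a (Suc L)" by blast
      have perm: "\<sigma> permutes S" using s by (simp add: MM_def)
      have pm: "permutation \<sigma>" using perm fin permutes_imp_permutation by blast
      have ne: "\<sigma> a \<noteq> a" using s card_orbit_1[OF pm, of a] L by (auto simp: MM_def)
      have "\<sigma> a \<in> S" using perm aS by (simp add: permutes_in_image)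
      then show "q \<in> (SIGMA b:S - {a}. MM (S - {b}) a L)"
        using MM_step[OF perm fin aS ne] s ne by (auto simp: q F_def)
    qed
    show "G ` (SIGMA b:S - {a}. MM (S - {b}) a L) \<subseteq> MM S a (Suc L)"
    proof
      fix q assume "q \<in> G ` (SIGMA b:S - {a}. MM (S - {b}) a L)"
      then obtain b \<tau> where q: "q = \<tau> \<circ> Transposition.transpose a b" and b: "b \<in> S - {a}"
        and t: "\<tau> \<in> MM (S - {b}) a L"
        by (auto simp: G_def)
      have tp: "\<tau> permutes S - {b}" using t by (simp add: MM_def)
      have tb: "\<tau> b = b" using tp by (simp add: permutes_not_in)
      have tS: "\<tau> permutes S" using tp by (rule permutes_subset) auto
      have perm: "q permutes S" unfolding q
        by (rule permutes_compose[OF permutes_swap_id tS]) (use aS b in auto)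
      have qa: "q a = b" by (simp add: q tb)
      have ne: "q a \<noteq> a" using qa b by auto
      have "q \<circ> Transposition.transpose a (q a) = \<tau>" by (simp add: q tb fun_eq_iff)
      then show "q \<in> MM S a (Suc L)"
        using MM_step[OF perm fin aS ne, of L] t qa by simp
    qed
  qed
  have "card (MM S a (Suc L)) = card (SIGMA b:S - {a}. MM (S - {b}) a L)"
    by (rule bij_betw_same_card[OF bij])
  also have "\<dots> = (\<Sum>b\<in>S - {a}. card (MM (S - {b}) a L))"
    using fin by (intro card_SigmaI) (auto intro: finite_MM)
  finally show ?thesis .
qed



definition EE :: "nat \<Rightarrow> real" where
  "EE n = (if even n then fact n * uu (n div 2) else 0)"

lemma orbit_card_bounds:
  assumes "\<sigma> permutes S" "finite S" "a \<in> S"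
  shows "1 \<le> card (orbit \<sigma> a)" "card (orbit \<sigma> a) \<le> card S"
proof -
  have sub: "orbit \<sigma> a \<subseteq> S" using assms(1,3) by (rule permutes_orbit_subset)
  have fin: "finite (orbit \<sigma> a)" using sub assms(2) by (rule finite_subset)
  have "orbit \<sigma> a \<noteq> {}" by (rule orbit_nonempty)
  then show "1 \<le> card (orbit \<sigma> a)" using fin by (simp add: Suc_le_eq card_gt_0_iff)
  show "card (orbit \<sigma> a) \<le> card S" using sub assms(2) by (rule card_mono[rotated])
qed

lemma AA_decomp:
  assumes fin: "finite S" and aS: "a \<in> S"
  shows "{\<sigma> \<in> AA S. Q (card (orbit \<sigma> a))} = (\<Union>L\<in>{L\<in>{1..card S}. even L \<and> Q L}. MM S a L)"
proof (intro set_eqI iffI)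
  fix \<sigma> assume s: "\<sigma> \<in> {\<sigma> \<in> AA S. Q (card (orbit \<sigma> a))}"
  then have perm: "\<sigma> permutes S" by (simp add: AA_def)
  note bd = orbit_card_bounds[OF perm fin aS]
  have ev: "even (card (orbit \<sigma> a))" using s aS by (simp add: AA_def)
  have "\<sigma> \<in> MM S a (card (orbit \<sigma> a))" using s by (simp add: AA_def MM_def)
  then show "\<sigma> \<in> (\<Union>L\<in>{L\<in>{1..card S}. even L \<and> Q L}. MM S a L)"
    using bd ev s by auto
next
  fix \<sigma> assume "\<sigma> \<in> (\<Union>L\<in>{L\<in>{1..card S}. even L \<and> Q L}. MM S a L)"
  then obtain L where L: "even L" "Q L" and s: "\<sigma> \<in> MM S a L" by auto
  have perm: "\<sigma> permutes S" and cL: "card (orbit \<sigma> a) = L"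
    and oth: "\<forall>x\<in>S. x \<notin> orbit \<sigma> a \<longrightarrow> even (card (orbit \<sigma> x))"
    using s by (auto simp: MM_def)
  have pm: "permutation \<sigma>" using perm fin permutes_imp_permutation by blast
  have "even (card (orbit \<sigma> x))" if x: "x \<in> S" for x
  proof (cases "x \<in> orbit \<sigma> a")
    case True
    then have "orbit \<sigma> x = orbit \<sigma> a" by (rule orb_eq[OF pm])
    then show ?thesis using cL L by simp
  next
    case False
    then show ?thesis using oth x by simp
  qed
  then show "\<sigma> \<in> {\<sigma> \<in> AA S. Q (card (orbit \<sigma> a))}"
    using perm cL L by (simp add: AA_def)
qed

lemma card_decomp:
  assumes fin: "finite S" and aS: "a \<in> S"
  shows "card {\<sigma> \<in> AA S. Q (card (orbit \<sigma> a))} = (\<Sum>L\<in>{L\<in>{1..card S}. even L \<and> Q L}. card (MM S a L))"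
  unfolding AA_decomp[OF fin aS]
proof (rule card_UN_disjoint)
  show "finite {L \<in> {1..card S}. even L \<and> Q L}" by simp
  show "\<forall>i\<in>{L \<in> {1..card S}. even L \<and> Q L}. finite (MM S a i)" using fin by (simp add: finite_MM)
  show "\<forall>i\<in>{L \<in> {1..card S}. even L \<and> Q L}. \<forall>j\<in>{L \<in> {1..card S}. even L \<and> Q L}.
          i \<noteq> j \<longrightarrow> MM S a i \<inter> MM S a j = {}"
    by (auto simp: MM_def)
qed

lemma MM_count:
  fixes S :: "'a set"
  assumes "finite S" "a \<in> S" "1 \<le> L" "L \<le> card S"
    and "\<And>T::'a set. finite T \<Longrightarrow> card T < card S \<Longrightarrow> real (card (AA T)) = EE (card T)"
  shows "real (card (MM S a L)) * fact (card S - L) = fact (card S - 1) * EE (card S - L)"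
  using assms
proof (induction L arbitrary: S)
  case 0
  then show ?case by simp
next
  case (Suc L S)
  note fin = Suc.prems(1) and aS = Suc.prems(2) and H = Suc.prems(5)
  show ?case
  proof (cases "L = 0")
    case True
    have c: "card (S - {a}) = card S - 1" using fin aS by simp
    have lt: "card (S - {a}) < card S" using fin aS by (rule card_Diff1_less)
    have "real (card (MM S a 1)) = EE (card S - 1)"
      using MM_1[OF fin aS] H[of "S - {a}"] lt fin c by simp
    then show ?thesis using True by simp
  next
    case False
    then have L1: "L \<ge> 1" by simp
    define n where "n = card S"
    have n2: "n \<ge> 2" using Suc.prems(4) L1 n_def by simp
    have each: "real (card (MM (S - {b}) a L)) * fact (n - Suc L) = fact (n - 2) * EE (n - Suc L)"
      if b: "b \<in> S - {a}" for b
    proof -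
      have cb: "card (S - {b}) = n - 1" using b fin n_def by simp
      have "real (card (MM (S - {b}) a L)) * fact (card (S - {b}) - L) =
            fact (card (S - {b}) - 1) * EE (card (S - {b}) - L)"
      proof (rule Suc.IH)
        show "finite (S - {b})" using fin by simp
        show "a \<in> S - {b}" using aS b by auto
        show "1 \<le> L" by (rule L1)
        show "L \<le> card (S - {b})" using cb Suc.prems(4) n_def by simp
        fix T :: "'a set" assume T: "finite T" "card T < card (S - {b})"
        then have "card T < card S" using cb n_def n2 by linarith
        from H[OF T(1) this] show "real (card (AA T)) = EE (card T)" .
      qed
      moreover have "card (S - {b}) - L = n - Suc L" "card (S - {b}) - 1 = n - 2" using cb by auto
      ultimately show ?thesis by simp
    qed
    have "real (card (MM S a (Suc L))) * fact (n - Suc L) =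
          (\<Sum>b\<in>S - {a}. real (card (MM (S - {b}) a L)) * fact (n - Suc L))"
      using card_MM_Suc[OF fin aS L1] by (simp add: sum_distrib_right)
    also have "\<dots> = (\<Sum>b\<in>S - {a}. fact (n - 2) * EE (n - Suc L))"
      using each by (rule sum.cong[OF refl])
    also have "\<dots> = real (n - 1) * (fact (n - 2) * EE (n - Suc L))"
      using fin aS n_def by simp
    also have "\<dots> = fact (n - 1) * EE (n - Suc L)"
    proof -
      define k where "k = n - 2"
      have nk: "n - 1 = Suc k" "n - 2 = k" using n2 by (simp_all add: k_def)
      have "fact (n - 1) = (real (n - 1) * fact (n - 2) :: real)"
        unfolding nk by (simp only: fact_Suc of_nat_mult)
      then show ?thesis by simp
    qed
    finally show ?thesis unfolding n_def .
  qed
qed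

lemma sum_uu_rev: "(\<Sum>k\<in>{1..m}. uu (m - k)) = (\<Sum>j<m. uu j)"
  by (rule sum.reindex_bij_witness[where i="\<lambda>j. m - j" and j="\<lambda>k. m - k"]) auto

lemma sum_id_even:
  "(\<Sum>L\<in>{L\<in>{1..2*m}. even L \<and> Q L}. fact (2*m - 1) * EE (2*m - L) / fact (2*m - L)) =
     fact (2*m - 1) * (\<Sum>k\<in>{k\<in>{1..m}. Q (2*k)}. uu (m - k))"
proof -
  have im: "{L\<in>{1..2*m}. even L \<and> Q L} = (\<lambda>k. 2*k) ` {k\<in>{1..m}. Q (2*k)}"
    by (auto elim!: evenE)
  have inj: "inj_on (\<lambda>k::nat. 2*k) {k\<in>{1..m}. Q (2*k)}" by (auto simp: inj_on_def)
  have "(\<Sum>L\<in>{L\<in>{1..2*m}. even L \<and> Q L}. fact (2*m - 1) * EE (2*m - L) / fact (2*m - L)) =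
        (\<Sum>k\<in>{k\<in>{1..m}. Q (2*k)}. fact (2*m - 1) * EE (2*m - 2*k) / fact (2*m - 2*k))"
    unfolding im sum.reindex[OF inj] comp_def by (rule refl)
  also have "\<dots> = (\<Sum>k\<in>{k\<in>{1..m}. Q (2*k)}. fact (2*m - 1) * uu (m - k))"
  proof (rule sum.cong[OF refl])
    fix k assume "k \<in> {k\<in>{1..m}. Q (2*k)}"
    have e: "2*m - 2*k = 2 * (m - k)" by simp
    show "fact (2*m - 1) * EE (2*m - 2*k) / fact (2*m - 2*k) = fact (2*m - 1) * uu (m - k)"
      unfolding e EE_def by simp
  qed
  also have "\<dots> = fact (2*m - 1) * (\<Sum>k\<in>{k\<in>{1..m}. Q (2*k)}. uu (m - k))"
    by (simp add: sum_distrib_left)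
  finally show ?thesis .
qed

lemma sum_id_odd:
  assumes "odd n"
  shows "(\<Sum>L\<in>{L\<in>{1..n}. even L \<and> Q L}. c * EE (n - L) / fact (n - L)) = 0"
proof (rule sum.neutral, rule ballI)
  fix L assume "L \<in> {L\<in>{1..n}. even L \<and> Q L}"
  then have "odd (n - L)" using assms by auto
  then show "c * EE (n - L) / fact (n - L) = 0" by (simp add: EE_def)
qed

lemma AA_card: "finite S \<Longrightarrow> real (card (AA S)) = EE (card S)"
proof (induction "card S" arbitrary: S rule: less_induct)
  case less
  show ?case
  proof (cases "S = {}")
    case True
    have "AA S = {id}" using True by (auto simp: AA_def)
    then show ?thesis using True by (simp add: EE_def)
  next
    case False
    then obtain a where aS: "a \<in> S" by blast
    define n where "n = card S"
    have n1: "n \<ge> 1" using False less.prems n_def by (simp add: Suc_le_eq card_gt_0_iff)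
    have H: "real (card (AA T)) = EE (card T)" if "finite T" "card T < card S" for T :: "'a set"
      using less.hyps[OF that(2) that(1)] .
    have "AA S = {\<sigma> \<in> AA S. (\<lambda>_. True) (card (orbit \<sigma> a))}" by simp
    then have "real (card (AA S)) = (\<Sum>L\<in>{L\<in>{1..n}. even L \<and> True}. real (card (MM S a L)))"
      using card_decomp[OF less.prems aS, of "\<lambda>_. True"] n_def by simp
    also have "\<dots> = (\<Sum>L\<in>{L\<in>{1..n}. even L \<and> True}. fact (n - 1) * EE (n - L) / fact (n - L))"
    proof (rule sum.cong[OF refl])
      fix L assume "L \<in> {L\<in>{1..n}. even L \<and> True}"
      then have "1 \<le> L" "L \<le> card S" using n_def by auto
      from MM_count[OF less.prems aS this H] show "real (card (MM S a L)) = fact (n - 1) * EE (n - L) / fact (n - L)"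
        unfolding n_def by (simp add: eq_divide_eq)
    qed
    also have "\<dots> = EE n"
    proof (cases "even n")
      case True
      then obtain m where m: "n = 2 * m" by (rule evenE)
      have m1: "m \<ge> 1" using m n1 by simp
      have "(\<Sum>L\<in>{L\<in>{1..n}. even L \<and> True}. fact (n - 1) * EE (n - L) / fact (n - L)) =
            fact (2*m - 1) * (\<Sum>k\<in>{k\<in>{1..m}. True}. uu (m - k))"
        unfolding m by (rule sum_id_even)
      also have "\<dots> = fact (2*m - 1) * (\<Sum>k\<in>{1..m}. uu (m - k))"
        by (intro arg_cong2[where f="(*)"] refl sum.cong) auto
      also have "\<dots> = fact (2*m - 1) * (2 * real m * uu m)"
        using sum_uu_rev[of m] sum_uu[of m] by simp
      also have "\<dots> = fact (2*m) * uu m"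
      proof -
        have "fact (2*m) = (real (2*m) * fact (2*m - 1) :: real)"
          using m1 fact_reduce[of "2*m"] by simp
        then show ?thesis by simp
      qed
      also have "\<dots> = EE n" by (simp add: EE_def m)
      finally show ?thesis .
    next
      case False
      then show ?thesis using sum_id_odd[OF False] by (simp add: EE_def)
    qed
    finally show ?thesis unfolding n_def .
  qed
qed



lemma even_cycle_perms_AA: "even_cycle_perms n = AA {1..n}"
  by (simp add: even_cycle_perms_def AA_def cycle_len_def)

lemma p_e_formula:
  assumes m1: "m \<ge> 1"
  shows "p_e (2*m) \<gamma> \<delta> =
    (\<Sum>k\<in>{k\<in>{1..m}. \<gamma> * real (2*m) \<le> real (2*k) \<and> real (2*k) \<le> \<delta> * real (2*m)}. uu (m - k))
      / (2 * real m * uu m)"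
proof -
  define S where "S = {1..2*m}"
  define Q where "Q = (\<lambda>L::nat. \<gamma> * real (2*m) \<le> real L \<and> real L \<le> \<delta> * real (2*m))"
  have fin: "finite S" by (simp add: S_def)
  have cS: "card S = 2*m" by (simp add: S_def)
  have aS: "(1::nat) \<in> S" using m1 by (simp add: S_def)
  have num: "{\<sigma> \<in> even_cycle_perms (2*m). \<gamma> * real (2*m) \<le> real (cycle_len \<sigma> 1) \<and>
        real (cycle_len \<sigma> 1) \<le> \<delta> * real (2*m)} = {\<sigma> \<in> AA S. Q (card (orbit \<sigma> 1))}"
    by (simp add: even_cycle_perms_AA S_def Q_def cycle_len_def)
  have H: "real (card (AA T)) = EE (card T)" if "finite T" for T :: "nat set"
    using AA_card[OF that] .
  have "real (card {\<sigma> \<in> AA S. Q (card (orbit \<sigma> 1))}) =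
        (\<Sum>L\<in>{L\<in>{1..2*m}. even L \<and> Q L}. real (card (MM S 1 L)))"
    unfolding card_decomp[OF fin aS] cS by simp
  also have "\<dots> = (\<Sum>L\<in>{L\<in>{1..2*m}. even L \<and> Q L}. fact (2*m - 1) * EE (2*m - L) / fact (2*m - L))"
  proof (rule sum.cong[OF refl])
    fix L assume "L \<in> {L\<in>{1..2*m}. even L \<and> Q L}"
    then have "1 \<le> L" "L \<le> card S" using cS by auto
    from MM_count[OF fin aS this H] show "real (card (MM S 1 L)) = fact (2*m - 1) * EE (2*m - L) / fact (2*m - L)"
      unfolding cS by (simp add: eq_divide_eq)
  qed
  also have "\<dots> = fact (2*m - 1) * (\<Sum>k\<in>{k\<in>{1..m}. Q (2*k)}. uu (m - k))"
    by (rule sum_id_even)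
  finally have N: "real (card {\<sigma> \<in> AA S. Q (card (orbit \<sigma> 1))}) =
      fact (2*m - 1) * (\<Sum>k\<in>{k\<in>{1..m}. Q (2*k)}. uu (m - k))" .
  have D: "real (card (even_cycle_perms (2*m))) = fact (2*m) * uu m"
    using H[OF fin] cS by (simp add: even_cycle_perms_AA S_def EE_def)
  have f: "fact (2*m) = (real (2*m) * fact (2*m - 1) :: real)"
    using m1 fact_reduce[of "2*m"] by simp
  have fp: "fact (2*m - 1) > (0::real)" by simp
  have up: "uu m > 0" by (rule uu_pos)
  have "p_e (2*m) \<gamma> \<delta> = fact (2*m - 1) * (\<Sum>k\<in>{k\<in>{1..m}. Q (2*k)}. uu (m - k)) / (fact (2*m) * uu m)"
    unfolding p_e_def num N D ..
  also have "\<dots> = (\<Sum>k\<in>{k\<in>{1..m}. Q (2*k)}. uu (m - k)) / (2 * real m * uu m)"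
    unfolding f using fp up by (simp add: field_simps)
  finally show ?thesis by (simp add: Q_def)
qed



definition lo :: "real \<Rightarrow> nat \<Rightarrow> nat" where "lo \<delta> m = nat \<lceil>(1 - \<delta>) * real m\<rceil>"
definition hi :: "real \<Rightarrow> nat \<Rightarrow> nat" where "hi \<gamma> m = min m (nat \<lfloor>(1 - \<gamma>) * real m\<rfloor> + 1)"

lemma lo_iff:
  assumes "\<delta> \<le> 1"
  shows "lo \<delta> m \<le> j \<longleftrightarrow> (1 - \<delta>) * real m \<le> real j"
proof -
  have "lo \<delta> m \<le> j \<longleftrightarrow> \<lceil>(1 - \<delta>) * real m\<rceil> \<le> int j"
    unfolding lo_def by (simp add: nat_le_iff)
  also have "\<dots> \<longleftrightarrow> (1 - \<delta>) * real m \<le> real j"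
    by (simp add: ceiling_le_iff)
  finally show ?thesis .
qed

lemma hi_iff:
  assumes "\<gamma> \<le> 1"
  shows "j < hi \<gamma> m \<longleftrightarrow> j < m \<and> real j \<le> (1 - \<gamma>) * real m"
proof -
  have nn: "0 \<le> (1 - \<gamma>) * real m" using assms by simp
  have "j < nat \<lfloor>(1 - \<gamma>) * real m\<rfloor> + 1 \<longleftrightarrow> int j \<le> \<lfloor>(1 - \<gamma>) * real m\<rfloor>"
    using nn by (simp add: le_nat_iff less_Suc_eq_le)
  also have "\<dots> \<longleftrightarrow> real j \<le> (1 - \<gamma>) * real m"
    by (simp add: le_floor_iff)
  finally show ?thesis unfolding hi_def by simp
qed

lemma sum_K_eq:
  assumes "0 \<le> \<gamma>" "\<gamma> \<le> \<delta>" "\<delta> \<le> 1"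
  shows "(\<Sum>k\<in>{k\<in>{1..m}. \<gamma> * real (2*m) \<le> real (2*k) \<and> real (2*k) \<le> \<delta> * real (2*m)}. uu (m - k))
       = (\<Sum>j\<in>{lo \<delta> m..<hi \<gamma> m}. uu j)"
proof (rule sum.reindex_bij_witness[where i="\<lambda>j. m - j" and j="\<lambda>k. m - k"])
  fix k assume k: "k \<in> {k\<in>{1..m}. \<gamma> * real (2*m) \<le> real (2*k) \<and> real (2*k) \<le> \<delta> * real (2*m)}"
  then have km: "k \<le> m" "1 \<le> k" by auto
  have r: "real (m - k) = real m - real k" using km by simp
  show "m - (m - k) = k" using km by simp
  have "(1 - \<delta>) * real m \<le> real (m - k)" using k r by (simp add: algebra_simps)
  moreover have "real (m - k) \<le> (1 - \<gamma>) * real m" using k r by (simp add: algebra_simps)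
  moreover have "m - k < m" using km by simp
  ultimately show "m - k \<in> {lo \<delta> m..<hi \<gamma> m}"
    using lo_iff[OF assms(3)] hi_iff[of \<gamma>] assms by simp
  show "uu (m - k) = uu (m - k)" ..
next
  fix j assume j: "j \<in> {lo \<delta> m..<hi \<gamma> m}"
  then have j1: "(1 - \<delta>) * real m \<le> real j" using lo_iff[OF assms(3)] by simp
  have j2: "j < m" "real j \<le> (1 - \<gamma>) * real m" using j hi_iff[of \<gamma>] assms by auto
  have r: "real (m - j) = real m - real j" using j2 by simp
  show "m - (m - j) = j" using j2 by simp
  have "\<gamma> * real (2*m) \<le> real (2*(m - j))" using j2 r by (simp add: algebra_simps)
  moreover have "real (2*(m - j)) \<le> \<delta> * real (2*m)" using j1 r by (simp add: algebra_simps)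
  ultimately show "m - j \<in> {k\<in>{1..m}. \<gamma> * real (2*m) \<le> real (2*k) \<and> real (2*k) \<le> \<delta> * real (2*m)}"
    using j2 by simp
qed

lemma lo_le_hi:
  assumes "0 \<le> \<gamma>" "\<gamma> \<le> \<delta>" "\<delta> \<le> 1"
  shows "lo \<delta> m \<le> hi \<gamma> m"
proof -
  have "\<lceil>(1 - \<delta>) * real m\<rceil> \<le> \<lceil>(1 - \<gamma>) * real m\<rceil>"
    using assms by (intro ceiling_mono mult_right_mono) auto
  also have "\<dots> \<le> \<lfloor>(1 - \<gamma>) * real m\<rfloor> + 1"
  proof -
    have "(1 - \<gamma>) * real m \<le> real_of_int (\<lfloor>(1 - \<gamma>) * real m\<rfloor> + 1)"
      using real_of_int_floor_add_one_gt[of "(1 - \<gamma>) * real m"] by simp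
    then show ?thesis by (simp only: ceiling_le_iff)
  qed
  finally have a: "\<lceil>(1 - \<delta>) * real m\<rceil> \<le> \<lfloor>(1 - \<gamma>) * real m\<rfloor> + 1" .
  have b: "\<lceil>(1 - \<delta>) * real m\<rceil> \<le> int m"
    using assms by (simp add: ceiling_le_iff mult_left_le_one_le)
  have nn: "0 \<le> \<lfloor>(1 - \<gamma>) * real m\<rfloor>" using assms by simp
  show ?thesis unfolding lo_def hi_def using a b nn by (simp add: nat_le_iff)
qed

lemma p_e_gg:
  assumes "0 \<le> \<gamma>" "\<gamma> \<le> \<delta>" "\<delta> \<le> 1" "m \<ge> 1"
  shows "p_e (2*m) \<gamma> \<delta> = gg (hi \<gamma> m) / gg m - gg (lo \<delta> m) / gg m"
proof -
  have le: "lo \<delta> m \<le> hi \<gamma> m" using assms(1-3) by (rule lo_le_hi)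
  have "(\<Sum>j\<in>{lo \<delta> m..<hi \<gamma> m}. uu j) = (\<Sum>j<hi \<gamma> m. uu j) - (\<Sum>j<lo \<delta> m. uu j)"
    using sum_diff_nat_ivl[OF _ le, of 0 uu] by (simp add: atLeast0LessThan)
  also have "\<dots> = 2 * gg (hi \<gamma> m) - 2 * gg (lo \<delta> m)"
    by (simp add: sum_uu gg_def)
  finally have s: "(\<Sum>j\<in>{lo \<delta> m..<hi \<gamma> m}. uu j) = 2 * gg (hi \<gamma> m) - 2 * gg (lo \<delta> m)" .
  have g: "2 * real m * uu m = 2 * gg m" by (simp add: gg_def)
  show ?thesis
    unfolding p_e_formula[OF assms(4)] sum_K_eq[OF assms(1-3)] s g
    by (simp add: diff_divide_distrib)
qed

lemma lin_lim:
  assumes "\<And>m. t * real m \<le> real (N m)" "\<And>m. real (N m) \<le> t * real m + 1"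
  shows "(\<lambda>m. real (N m) / real m) \<longlonglongrightarrow> t"
proof (rule tendsto_sandwich[where f="\<lambda>m. t" and h="\<lambda>m. t + 1 / real m"])
  show "\<forall>\<^sub>F m in sequentially. t \<le> real (N m) / real m"
    using eventually_ge_at_top[of "1::nat"]
  proof eventually_elim
    case (elim m)
    then show ?case using assms(1)[of m] by (simp add: pos_le_divide_eq)
  qed
  show "\<forall>\<^sub>F m in sequentially. real (N m) / real m \<le> t + 1 / real m"
    using eventually_ge_at_top[of "1::nat"]
  proof eventually_elim
    case (elim m)
    then have "real (N m) / real m \<le> (t * real m + 1) / real m"
      using assms(2)[of m] by (intro divide_right_mono) auto
    also have "\<dots> = t + 1 / real m" using elim by (simp add: field_simps)
    finally show ?case .
  qed
  show "(\<lambda>m. t) \<longlonglongrightarrow> t" by simp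
  have "(\<lambda>m. t + 1 / real m) \<longlonglongrightarrow> t + 0"
    by (intro tendsto_add tendsto_const lim_const_over_n)
  then show "(\<lambda>m. t + 1 / real m) \<longlonglongrightarrow> t" by simp
qed

lemma lo_lim:
  assumes "\<delta> \<le> 1"
  shows "(\<lambda>m. real (lo \<delta> m) / real m) \<longlonglongrightarrow> 1 - \<delta>"
proof (rule lin_lim)
  fix m
  have nn: "0 \<le> (1 - \<delta>) * real m" using assms by simp
  have "real (lo \<delta> m) = real_of_int \<lceil>(1 - \<delta>) * real m\<rceil>"
    unfolding lo_def using nn by simp
  then show "(1 - \<delta>) * real m \<le> real (lo \<delta> m)" "real (lo \<delta> m) \<le> (1 - \<delta>) * real m + 1"
    by (simp_all add: le_of_int_ceiling)
qed

lemma hi_lim: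
  assumes "0 \<le> \<gamma>" "\<gamma> \<le> 1"
  shows "(\<lambda>m. real (hi \<gamma> m) / real m) \<longlonglongrightarrow> 1 - \<gamma>"
proof (rule lin_lim)
  fix m
  have nn: "0 \<le> (1 - \<gamma>) * real m" using assms by simp
  have le1: "(1 - \<gamma>) * real m \<le> real m" using assms by (simp add: mult_left_le_one_le)
  have e: "real (nat \<lfloor>(1 - \<gamma>) * real m\<rfloor> + 1) = real_of_int \<lfloor>(1 - \<gamma>) * real m\<rfloor> + 1"
    using nn by simp
  have f1: "real_of_int \<lfloor>(1 - \<gamma>) * real m\<rfloor> \<le> (1 - \<gamma>) * real m" by (rule of_int_floor_le)
  have f2: "(1 - \<gamma>) * real m < real_of_int \<lfloor>(1 - \<gamma>) * real m\<rfloor> + 1" by (rule real_of_int_floor_add_one_gt)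
  have h: "real (hi \<gamma> m) = min (real m) (real (nat \<lfloor>(1 - \<gamma>) * real m\<rfloor> + 1))"
    unfolding hi_def by (simp only: of_nat_min)
  show "(1 - \<gamma>) * real m \<le> real (hi \<gamma> m)" unfolding h e using le1 f2 by simp
  show "real (hi \<gamma> m) \<le> (1 - \<gamma>) * real m + 1" unfolding h e by (rule min.coboundedI2) (use f1 in simp)
qed

theorem theorem3p5:
  fixes \<gamma> \<delta> :: real
  assumes "0 \<le> \<gamma>" "\<gamma> \<le> \<delta>" "\<delta> \<le> 1"
  shows "(\<lambda>m. p_e (2 * m) \<gamma> \<delta>) \<longlonglongrightarrow> sqrt (1 - \<gamma>) - sqrt (1 - \<delta>)"
proof -
  have g1: "\<gamma> \<le> 1" using assms by simp
  have "(\<lambda>m. gg (hi \<gamma> m) / gg m - gg (lo \<delta> m) / gg m) \<longlonglongrightarrow> sqrt (1 - \<gamma>) - sqrt (1 - \<delta>)"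
    by (intro tendsto_diff ratio_lim hi_lim lo_lim) (use assms g1 in auto)
  moreover have "\<forall>\<^sub>F m in sequentially. gg (hi \<gamma> m) / gg m - gg (lo \<delta> m) / gg m = p_e (2 * m) \<gamma> \<delta>"
    using eventually_ge_at_top[of "1::nat"]
  proof eventually_elim
    case (elim m)
    show ?case using p_e_gg[OF assms elim] by simp
  qed
  ultimately show ?thesis by (rule Lim_transform_eventually)
qed

end
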